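(* Let $X$ be an infinite-dimensional complex Banach space, $T \in \mathcal{B}(X)$, and $N \in \mathcal{B}(X)$ a nilpotent operator commuting with $T$. Then $\Pi_{a}(T+N)=\Pi_{a}(T)$.
   Context: $\mathcal{B}(X)$ is the algebra of bounded linear operators on $X$. $\sigma_a(T)$ is the approximate point spectrum of $T$. For $A\in\mathcal{B}(X)$, $asc(A)=\inf\{n\in\mathbb{N}:\mathcal{N}(A^n)=\mathcal{N}(A^{n+1})\}$ (infimum of empty set is $\infty$); $A$ is left Drazin invertible if $asc(A)<\infty$ and $\mathcal{R}(A^{asc(A)+1})$ is closed. A left pole of $T$ is a $\lambda\in\sigma_a(T)$ such that $T-\lambda I$ is left Drazin invertible; $\Pi_a(T)$ is the set of left poles of $T$. *)

theory Defs
  imports "HOL-Analysis.Analysis"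
begin

text \<open>A complex Banach space is modelled as a real Banach space 'a together with a
  complex scalar multiplication sc extending the real one, satisfying the
  vector-space axioms and the norm axiom norm (sc a x) = cmod a * norm x.\<close>

definition complex_scalar :: "(complex \<Rightarrow> 'a::real_normed_vector \<Rightarrow> 'a) \<Rightarrow> bool" where
  "complex_scalar sc \<longleftrightarrow>
     (\<forall>r x. sc (complex_of_real r) x = r *\<^sub>R x) \<and>
     (\<forall>a b x. sc (a * b) x = sc a (sc b x)) \<and>
     (\<forall>a b x. sc (a + b) x = sc a x + sc b x) \<and>
     (\<forall>a x y. sc a (x + y) = sc a x + sc a y) \<and>
     (\<forall>a x. norm (sc a x) = cmod a * norm x)"

definition bounded_op :: "(complex \<Rightarrow> 'a::real_normed_vector \<Rightarrow> 'a) \<Rightarrow> ('a \<Rightarrow> 'a) \<Rightarrow> bool" where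
  "bounded_op sc T \<longleftrightarrow> bounded_linear T \<and> (\<forall>a x. T (sc a x) = sc a (T x))"

definition infinite_dimensional :: "'a::real_vector itself \<Rightarrow> bool" where
  "infinite_dimensional _ \<longleftrightarrow> \<not> (\<exists>S::'a set. finite S \<and> span S = UNIV)"

definition nilpotent_op :: "('a \<Rightarrow> 'a::zero) \<Rightarrow> bool" where
  "nilpotent_op N \<longleftrightarrow> (\<exists>n. N ^^ n = (\<lambda>x. 0))"

definition bounded_below :: "('a::real_normed_vector \<Rightarrow> 'a) \<Rightarrow> bool" where
  "bounded_below A \<longleftrightarrow> (\<exists>c>0. \<forall>x. c * norm x \<le> norm (A x))"

definition approx_point_spectrum ::
  "(complex \<Rightarrow> 'a::real_normed_vector \<Rightarrow> 'a) \<Rightarrow> ('a \<Rightarrow> 'a) \<Rightarrow> complex set" where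
  "approx_point_spectrum sc T = {l. \<not> bounded_below (\<lambda>x. T x - sc l x)}"

definition ascent :: "('a \<Rightarrow> 'a::zero) \<Rightarrow> enat" where
  "ascent A = (if \<exists>n. (A ^^ n) -` {0} = (A ^^ Suc n) -` {0}
               then enat (LEAST n. (A ^^ n) -` {0} = (A ^^ Suc n) -` {0}) else \<infinity>)"

definition left_drazin_invertible :: "('a \<Rightarrow> 'a::{zero,topological_space}) \<Rightarrow> bool" where
  "left_drazin_invertible A \<longleftrightarrow>
     ascent A < \<infinity> \<and> closed (range (A ^^ (the_enat (ascent A) + 1)))"

definition left_poles ::
  "(complex \<Rightarrow> 'a::real_normed_vector \<Rightarrow> 'a) \<Rightarrow> ('a \<Rightarrow> 'a) \<Rightarrow> complex set" where
  "left_poles sc T = {l \<in> approx_point_spectrum sc T.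
                        left_drazin_invertible (\<lambda>x. T x - sc l x)}"

end

theory Submission
  imports Defs
begin

lemma funpow_bl: "bounded_linear (f::'a::real_normed_vector \<Rightarrow> 'a) \<Longrightarrow> bounded_linear (f ^^ n)"
proof (induction n)
  case 0 have "f ^^ 0 = (\<lambda>x. x)" by auto then show ?case by (simp add: id_def)
next
  case (Suc n)
  have "f ^^ Suc n = (\<lambda>x. f ((f ^^ n) x))" by auto
  then show ?case using bounded_linear_compose[OF Suc.prems Suc.IH[OF Suc.prems]] by simp
qed

lemma funpow_comm:
  assumes "\<And>x. A (N x) = N (A x)"
  shows "A ((N ^^ j) x) = (N ^^ j) (A x)"
  by (induction j arbitrary: x) (auto simp: assms)

lemma perturb_below:
  fixes q :: "'a::real_normed_vector \<Rightarrow> real" and N A :: "'a \<Rightarrow> 'a"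
  assumes q_add: "\<And>x y. q (x + y) \<le> q x + q y" and q_neg: "\<And>x. q (- x) = q x"
    and q0: "q 0 = 0"
    and Nl: "bounded_linear N" and qN: "\<And>x. q (N x) \<le> M * q x" and M: "M \<ge> 0"
    and nil: "\<And>x. (N ^^ m) x = 0" and comm: "\<And>x. A (N x) = N (A x)"
    and c: "c > 0" "\<And>x. c * q x \<le> q (A x)"
  shows "\<exists>c'>0. \<forall>x. c' * q x \<le> q (A x + N x)"
proof -
  have qNj: "q ((N ^^ j) x) \<le> M ^ j * q x" for j x
  proof (induction j arbitrary: x)
    case 0 then show ?case by simp
  next
    case (Suc j)
    have "q ((N ^^ Suc j) x) = q (N ((N ^^ j) x))" by simp
    also have "\<dots> \<le> M * q ((N ^^ j) x)" by (rule qN)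
    also have "\<dots> \<le> M * (M ^ j * q x)" using Suc M by (simp add: mult_left_mono)
    finally show ?case by simp
  qed
  have Njl: "bounded_linear (N ^^ j)" for j by (rule funpow_bl[OF Nl])
  have main: "i \<le> m \<Longrightarrow> \<exists>D\<ge>0. \<forall>x. q ((N ^^ (m - i)) x) \<le> D * q (A x + N x)" for i
  proof (induction i)
    case 0 then show ?case using nil q0 by (intro exI[of _ 0]) simp
  next
    case (Suc i)
    then obtain D where D: "D \<ge> 0" "\<And>x. q ((N ^^ (m - i)) x) \<le> D * q (A x + N x)" by auto
    define j where "j = m - Suc i"
    have mi: "m - i = Suc j" using Suc.prems j_def by simp
    show ?case
    proof (intro exI[of _ "(M ^ j + D) / c"] conjI allI)
      show "0 \<le> (M ^ j + D) / c" using D M c by simp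
      fix x
      have "c * q ((N ^^ j) x) \<le> q (A ((N ^^ j) x))" by (rule c(2))
      also have "\<dots> = q ((N ^^ j) (A x))" by (simp add: funpow_comm[of A N, OF comm])
      also have "(N ^^ j) (A x) = (N ^^ j) (A x + N x) + - ((N ^^ Suc j) x)"
        using linear_add[OF bounded_linear.linear[OF Njl[of j]], of "A x + N x" "- N x"]
          linear_neg[OF bounded_linear.linear[OF Njl[of j]], of "N x"]
        by (simp add: funpow_swap1)
      also have "q \<dots> \<le> q ((N ^^ j) (A x + N x)) + q ((N ^^ Suc j) x)"
        using q_add q_neg by metis
      also have "\<dots> \<le> M ^ j * q (A x + N x) + D * q (A x + N x)"
        using qNj[of j "A x + N x"] D(2)[of x] mi by simp
      finally have "c * q ((N ^^ j) x) \<le> (M ^ j + D) * q (A x + N x)"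
        by (simp add: algebra_simps)
      then show "q ((N ^^ (m - Suc i)) x) \<le> (M ^ j + D) / c * q (A x + N x)"
        using c(1) unfolding j_def[symmetric] by (simp add: field_simps mult.commute)
    qed
  qed
  obtain D where D: "D \<ge> 0" "\<And>x. q x \<le> D * q (A x + N x)"
    using main[of m] by auto
  have qnn: "q x \<ge> 0" for x
    using q_add[of x "-x"] q_neg[of x] q0 by simp
  show ?thesis
  proof (intro exI[of _ "1 / (D + 1)"] conjI allI)
    show "0 < 1 / (D + 1)" using D by simp
    fix x
    have "q x \<le> (D + 1) * q (A x + N x)"
      using D(2)[of x] qnn[of "A x + N x"] by (simp add: algebra_simps)
    then show "1 / (D + 1) * q x \<le> q (A x + N x)"
      using D(1) by (simp add: field_simps mult.commute)
  qed
qed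

lemma infdist_ge:
  assumes "K \<noteq> {}" "\<And>k. k \<in> K \<Longrightarrow> a \<le> dist x k"
  shows "a \<le> infdist x K"
  using assms by (simp add: infdist_notempty cINF_greatest)

locale subsp =
  fixes K :: "'a::real_normed_vector set"
  assumes K0: "0 \<in> K" and Kadd: "\<And>a b. a \<in> K \<Longrightarrow> b \<in> K \<Longrightarrow> a + b \<in> K"
    and Kneg: "\<And>a. a \<in> K \<Longrightarrow> - a \<in> K"
begin

lemma Kne: "K \<noteq> {}" using K0 by auto

lemma q_add: "infdist (x + y) K \<le> infdist x K + infdist y K"
proof -
  have "infdist (x + y) K - dist y k2 \<le> infdist x K" if "k2 \<in> K" for k2
  proof -
    have "infdist (x + y) K - dist y k2 \<le> dist x k1" if "k1 \<in> K" for k1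
    proof -
      have "infdist (x + y) K \<le> dist (x + y) (k1 + k2)"
        using infdist_le Kadd \<open>k1 \<in> K\<close> \<open>k2 \<in> K\<close> by blast
      also have "\<dots> \<le> dist x k1 + dist y k2"
        using norm_diff_triangle_ineq[of x y k1 k2] by (simp add: dist_norm)
      finally show ?thesis by simp
    qed
    then show ?thesis by (intro infdist_ge[OF Kne]) auto
  qed
  then have "infdist (x + y) K - infdist x K \<le> dist y k2" if "k2 \<in> K" for k2
    using that by force
  then have "infdist (x + y) K - infdist x K \<le> infdist y K"
    by (intro infdist_ge[OF Kne]) auto
  then show ?thesis by simp
qed

lemma q_neg1: "infdist (- x) K \<le> infdist x K"
proof (intro infdist_ge[OF Kne])
  fix k assume "k \<in> K"
  then have "infdist (- x) K \<le> dist (- x) (- k)" using infdist_le Kneg by blast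
  also have "\<dots> = dist x k" by (simp add: dist_norm norm_minus_commute)
  finally show "infdist (- x) K \<le> dist x k" .
qed

lemma q_neg: "infdist (- x) K = infdist x K"
  using q_neg1[of x] q_neg1[of "-x"] by simp

lemma q0: "infdist 0 K = 0" using K0 by simp

lemma q_lin:
  assumes L: "bounded_linear L" and LK: "\<And>k. k \<in> K \<Longrightarrow> L k \<in> K"
  shows "\<exists>M>0. \<forall>x. infdist (L x) K \<le> M * infdist x K"
proof -
  obtain M where M: "M > 0" "\<And>x. norm (L x) \<le> norm x * M"
    using bounded_linear.pos_bounded[OF L] by blast
  have "infdist (L x) K \<le> M * infdist x K" for x
  proof -
    have "infdist (L x) K / M \<le> dist x k" if "k \<in> K" for k
    proof -
      have "infdist (L x) K \<le> dist (L x) (L k)" using infdist_le LK that by blast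
      also have "\<dots> = norm (L (x - k))" by (simp add: dist_norm linear_diff[OF bounded_linear.linear[OF L]])
      also have "\<dots> \<le> dist x k * M" using M(2) by (simp add: dist_norm)
      finally show ?thesis using M(1) by (simp add: field_simps)
    qed
    then have "infdist (L x) K / M \<le> infdist x K" by (intro infdist_ge[OF Kne]) auto
    then show ?thesis using M(1) by (simp add: field_simps mult.commute)
  qed
  then show ?thesis using M(1) by blast
qed

end

lemma approx_to_exact:
  fixes S :: "'a::banach \<Rightarrow> 'b::real_normed_vector"
  assumes S: "bounded_linear S" and YS: "\<And>r x. r \<in> Y \<Longrightarrow> r - S x \<in> Y"
    and C: "C \<ge> 0"
    and ap: "\<And>y e. y \<in> Y \<Longrightarrow> e > 0 \<Longrightarrow> \<exists>x. norm x \<le> C * norm y \<and> norm (y - S x) < e"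
    and y: "y \<in> Y"
  shows "\<exists>x. S x = y \<and> norm x \<le> 2 * C * norm y"
proof (cases "y = 0")
  case True then show ?thesis
    by (intro exI[of _ 0]) (simp add: linear_0[OF bounded_linear.linear[OF S]])
next
  case False
  then have ny: "norm y > 0" by simp
  define P where "P = (\<lambda>n r x. norm x \<le> C * norm r \<and> norm (r - S x) < norm y / 2 ^ Suc n)"
  define f where "f = (\<lambda>n r. SOME x. P n r x)"
  have f: "P n r (f n r)" if "r \<in> Y" for n r
  proof -
    have "\<exists>x. P n r x" unfolding P_def using ap[OF that, of "norm y / 2 ^ Suc n"] ny by simp
    then show ?thesis unfolding f_def by (rule someI_ex)
  qed
  define r where "r = rec_nat y (\<lambda>n rn. rn - S (f n rn))"
  have r0: "r 0 = y" and rS: "r (Suc n) = r n - S (f n (r n))" for n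
    by (simp_all add: r_def)
  have rY: "r n \<in> Y" for n
    by (induction n) (simp_all add: r0 rS y YS)
  have rb: "norm (r n) \<le> norm y / 2 ^ n" for n
  proof (cases n)
    case 0 then show ?thesis by (simp add: r0)
  next
    case (Suc k)
    have "norm (r (Suc k)) < norm y / 2 ^ Suc k"
      using f[OF rY[of k], of k] by (simp add: rS P_def)
    then show ?thesis using Suc by simp
  qed
  define x where "x = (\<lambda>n. f n (r n))"
  have xb: "norm (x n) \<le> C * norm y * (1/2) ^ n" for n
  proof -
    have "norm (x n) \<le> C * norm (r n)" using f[OF rY[of n], of n] by (simp add: x_def P_def)
    also have "\<dots> \<le> C * (norm y / 2 ^ n)" using mult_left_mono[OF rb[of n] C] by simp
    also have "\<dots> = C * norm y * (1/2) ^ n" by (simp add: power_divide)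
    finally show ?thesis .
  qed
  have gs: "summable (\<lambda>n. C * norm y * (1/2::real) ^ n)"
    by (intro summable_mult summable_geometric) simp
  have sx: "summable x" by (rule summable_comparison_test'[OF gs xb])
  have snx: "summable (\<lambda>n. norm (x n))"
    by (rule summable_comparison_test'[OF gs]) (simp add: xb)
  have "norm (suminf x) \<le> (\<Sum>n. norm (x n))" by (rule summable_norm[OF snx])
  also have "\<dots> \<le> (\<Sum>n. C * norm y * (1/2::real) ^ n)"
    by (intro suminf_le snx gs xb)
  also have "\<dots> = 2 * C * norm y"
    by (simp add: suminf_mult suminf_geometric)
  finally have nb: "norm (suminf x) \<le> 2 * C * norm y" .
  have ps: "(\<Sum>k<n. S (x k)) = y - r n" for n
    by (induction n) (simp_all add: r0 rS x_def)
  have rlim: "r \<longlonglongrightarrow> 0"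
  proof (rule Lim_null_comparison)
    show "\<forall>\<^sub>F n in sequentially. norm (r n) \<le> norm y * (1/2) ^ n"
      using rb by (simp add: power_divide)
    show "(\<lambda>n. norm y * (1/2::real) ^ n) \<longlonglongrightarrow> 0"
      by (intro tendsto_mult_right_zero LIMSEQ_power_zero) simp
  qed
  have "(\<lambda>n. S (x n)) sums y"
    unfolding sums_def ps using tendsto_diff[OF tendsto_const rlim, of y] by simp
  moreover have "(\<lambda>n. S (x n)) sums S (suminf x)"
    by (rule bounded_linear.sums[OF S summable_sums[OF sx]])
  ultimately have "S (suminf x) = y" by (simp add: sums_unique2)
  then show ?thesis using nb by blast
qed

lemma exact_imp_closed:
  fixes S :: "'a::banach \<Rightarrow> 'b::real_normed_vector"
  assumes S: "bounded_linear S" and C: "C \<ge> 0"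
    and ex: "\<And>x. \<exists>x'. S x' = S x \<and> norm x' \<le> C * norm (S x)"
  shows "closed (range S)"
proof -
  let ?Y = "closure (range S)"
  have lin: "linear S" using S by (rule bounded_linear.linear)
  have YS: "r - S x \<in> ?Y" if "r \<in> ?Y" for r x
  proof (unfold closure_approachable, intro allI impI)
    fix e :: real assume "e > 0"
    from that have "\<forall>e>0. \<exists>y\<in>range S. dist y r < e" by (simp only: closure_approachable)
    then obtain z where "z \<in> range S" "dist z r < e" using \<open>e > 0\<close> by blast
    then obtain w where "z = S w" by blast
    have "S (w - x) \<in> range S" by simp
    moreover have "dist (S (w - x)) (r - S x) < e"
      using \<open>dist z r < e\<close> \<open>z = S w\<close> by (simp add: linear_diff[OF lin] dist_norm)
    ultimately show "\<exists>y\<in>range S. dist y (r - S x) < e" by blast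
  qed
  have ap: "\<exists>x. norm x \<le> 2 * C * norm y \<and> norm (y - S x) < e" if "y \<in> ?Y" "e > 0" for y e
  proof (cases "y = 0")
    case True then show ?thesis using \<open>e > 0\<close>
      by (intro exI[of _ 0]) (simp add: linear_0[OF lin])
  next
    case False
    have me: "min e (norm y) > 0" using False \<open>e > 0\<close> by simp
    from that(1) have "\<forall>e>0. \<exists>z\<in>range S. dist z y < e" by (simp only: closure_approachable)
    then obtain z where "z \<in> range S" "dist z y < min e (norm y)" using me by blast
    then obtain w where w: "z = S w" by blast
    obtain x' where x': "S x' = S w" "norm x' \<le> C * norm (S w)" using ex by blast
    have "norm z \<le> norm y + dist z y" by (simp add: dist_norm norm_triangle_sub)
    then have "norm z \<le> 2 * norm y" using \<open>dist z y < min e (norm y)\<close> by simp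
    then have "C * norm z \<le> C * (2 * norm y)" using C by (rule mult_left_mono)
    then have "norm x' \<le> 2 * C * norm y" using x' w by simp
    moreover have "norm (y - S x') < e" using x' w \<open>dist z y < min e (norm y)\<close>
      by (simp add: dist_norm norm_minus_commute)
    ultimately show ?thesis by blast
  qed
  have "?Y \<subseteq> range S"
  proof
    fix y assume "y \<in> ?Y"
    from approx_to_exact[OF S YS _ ap this] C show "y \<in> range S" by auto
  qed
  then show ?thesis using closure_subset_eq[of "range S"] by simp
qed

lemma open_mapping_closed_range:
  fixes S :: "'a::banach \<Rightarrow> 'b::banach"
  assumes S: "bounded_linear S" and cl: "closed (range S)"
  shows "\<exists>C>0. \<forall>x. \<exists>x'. S x' = S x \<and> norm x' \<le> C * norm (S x)"
proof -
  let ?Y = "range S"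
  have lin: "linear S" using S by (rule bounded_linear.linear)
  define T where "T n = closure (S ` cball 0 (real n))" for n
  have "closedin euclidean ?Y" using cl by (simp only: closed_closedin)
  then have cm: "completely_metrizable_space (top_of_set ?Y)"
    by (rule completely_metrizable_space_closedin[OF completely_metrizable_space_euclidean])
  have TY: "T n \<subseteq> ?Y" for n
    unfolding T_def by (rule closure_minimal) (auto simp: cl)
  have Tcl: "closedin (top_of_set ?Y) (T n)" for n
    by (rule closed_subset[OF TY]) (simp add: T_def)
  have UT: "\<Union>(range T) = ?Y"
  proof
    show "\<Union>(range T) \<subseteq> ?Y" using TY by blast
    show "?Y \<subseteq> \<Union>(range T)"
    proof
      fix y assume "y \<in> ?Y"
      then obtain x where x: "y = S x" by blast
      have "x \<in> cball 0 (real (nat \<lceil>norm x\<rceil>))"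
        using real_nat_ceiling_ge[of "norm x"] by simp
      then have "y \<in> S ` cball 0 (real (nat \<lceil>norm x\<rceil>))" using x by (rule rev_image_eqI)
      then have "y \<in> T (nat \<lceil>norm x\<rceil>)" unfolding T_def by (rule subsetD[OF closure_subset])
      then show "y \<in> \<Union>(range T)" by blast
    qed
  qed
  have "\<exists>n. (top_of_set ?Y) interior_of (T n) \<noteq> {}"
  proof (rule ccontr)
    assume "\<not> ?thesis"
    then have ne: "(top_of_set ?Y) interior_of (T n) = {}" for n by blast
    have "(top_of_set ?Y) interior_of \<Union>(range T) = {}"
    proof (rule Baire_category_alt)
      show "completely_metrizable_space (top_of_set ?Y) \<or>
            locally_compact_space (top_of_set ?Y) \<and> regular_space (top_of_set ?Y)"
        using cm by blast
      show "countable (range T)" by simp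
      fix Z assume "Z \<in> range T"
      then obtain n where "Z = T n" by blast
      then show "closedin (top_of_set ?Y) Z \<and> (top_of_set ?Y) interior_of Z = {}"
        using Tcl ne by simp
    qed
    moreover have "(top_of_set ?Y) interior_of ?Y = ?Y"
      using interior_of_topspace[of "top_of_set ?Y"] by simp
    ultimately have "?Y = {}" using UT by simp
    then show False by blast
  qed
  then obtain n y0 U where U: "openin (top_of_set ?Y) U" "y0 \<in> U" "U \<subseteq> T n"
    by (auto simp: interior_of_def)
  then obtain V where V: "open V" "U = ?Y \<inter> V" by (auto simp: openin_open)
  then obtain r where r: "r > 0" "ball y0 r \<subseteq> V" using U(2) open_contains_ball by blast
  have y0Y: "y0 \<in> ?Y" and y0T: "y0 \<in> T n" using U V by auto
  have ap1: "\<exists>x. norm x \<le> 2 * real n \<and> norm (y - S x) < e"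
    if y: "y \<in> ?Y" "norm y < r" and e: "e > 0" for y e
  proof -
    obtain a b where ab: "y0 = S a" "y = S b" using y0Y y by blast
    have "y0 + y = S (a + b)" using ab linear_add[OF lin] by simp
    then have "y0 + y \<in> ?Y" by simp
    moreover have "y0 + y \<in> ball y0 r" using y by (simp add: dist_norm)
    ultimately have "y0 + y \<in> T n" using U V r by blast
    then have "\<forall>e>0. \<exists>z\<in>S ` cball 0 (real n). dist z (y0 + y) < e"
      unfolding T_def by (simp only: closure_approachable)
    moreover have e2: "e/2 > 0" using e by simp
    ultimately obtain z1 where z1: "z1 \<in> S ` cball 0 (real n)" "dist z1 (y0 + y) < e/2" by blast
    then obtain x1 where "x1 \<in> cball 0 (real n)" "z1 = S x1" by blast
    then have x1: "norm x1 \<le> real n" "dist (S x1) (y0 + y) < e/2" using z1 by auto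
    from y0T have "\<forall>e>0. \<exists>z\<in>S ` cball 0 (real n). dist z y0 < e"
      unfolding T_def by (simp only: closure_approachable)
    then obtain z2 where z2: "z2 \<in> S ` cball 0 (real n)" "dist z2 y0 < e/2" using e2 by blast
    then obtain x2 where "x2 \<in> cball 0 (real n)" "z2 = S x2" by blast
    then have x2: "norm x2 \<le> real n" "dist (S x2) y0 < e/2" using z2 by auto
    have "norm (x1 - x2) \<le> 2 * real n"
      using norm_triangle_ineq4[of x1 x2] x1 x2 by simp
    moreover have "norm (y - S (x1 - x2)) < e"
    proof -
      have "y - S (x1 - x2) = (y0 + y - S x1) - (y0 - S x2)"
        by (simp add: linear_diff[OF lin] algebra_simps)
      also have "norm \<dots> \<le> norm (y0 + y - S x1) + norm (y0 - S x2)"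
        by (rule norm_triangle_ineq4)
      also have "\<dots> < e" using x1 x2 by (simp add: dist_norm norm_minus_commute)
      finally show ?thesis .
    qed
    ultimately show ?thesis by blast
  qed
  define C where "C = 4 * real n / r"
  have C0: "C \<ge> 0" using r by (simp add: C_def)
  have ap: "\<exists>x. norm x \<le> C * norm y \<and> norm (y - S x) < e"
    if y: "y \<in> ?Y" and e: "e > 0" for y e
  proof (cases "y = 0")
    case True then show ?thesis using e by (intro exI[of _ 0]) (simp add: linear_0[OF lin])
  next
    case False
    define t where "t = r / (2 * norm y)"
    have t: "t > 0" using False r by (simp add: t_def)
    obtain b where b: "y = S b" using y by blast
    have "t *\<^sub>R y = S (t *\<^sub>R b)" using b linear_scale[OF lin] by simp
    then have y'Y: "t *\<^sub>R y \<in> ?Y" by simp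
    have ny': "norm (t *\<^sub>R y) = r / 2" using t False r(1) by (simp add: t_def)
    obtain x' where x': "norm x' \<le> 2 * real n" "norm (t *\<^sub>R y - S x') < e * t"
      using ap1[OF y'Y _ , of "e * t"] ny' r e t by auto
    have "norm ((1/t) *\<^sub>R x') \<le> C * norm y"
    proof -
      have "norm ((1/t) *\<^sub>R x') = norm x' / t" using t by simp
      also have "\<dots> \<le> 2 * real n / t" using x' t by (simp add: divide_right_mono)
      also have "\<dots> = C * norm y" using False r by (simp add: t_def C_def field_simps)
      finally show ?thesis .
    qed
    moreover have "norm (y - S ((1/t) *\<^sub>R x')) < e"
    proof -
      have "y - S ((1/t) *\<^sub>R x') = (1/t) *\<^sub>R (t *\<^sub>R y - S x')"
        using t by (simp add: linear_scale[OF lin] scaleR_diff_right)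
      then have "norm (y - S ((1/t) *\<^sub>R x')) = norm (t *\<^sub>R y - S x') / t"
        using t by simp
      also have "\<dots> < e" using x' t by (simp add: field_simps)
      finally show ?thesis .
    qed
    ultimately show ?thesis by blast
  qed
  have YS: "r - S x \<in> ?Y" if rY: "r \<in> ?Y" for r x
  proof -
    obtain a where "r = S a" using rY by blast
    then have "r - S x = S (a - x)" using linear_diff[OF lin] by simp
    then show ?thesis by simp
  qed
  show ?thesis
  proof (intro exI[of _ "2 * C + 1"] conjI allI)
    show "2 * C + 1 > 0" using C0 by simp
    fix x
    obtain x' where "S x' = S x" "norm x' \<le> 2 * C * norm (S x)"
      using approx_to_exact[OF S YS C0 ap, of "S x"] by blast
    moreover have "2 * C * norm (S x) \<le> (2 * C + 1) * norm (S x)" by (simp add: algebra_simps)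
    ultimately show "\<exists>x'. S x' = S x \<and> norm x' \<le> (2 * C + 1) * norm (S x)" by force
  qed
qed

definition gker :: "('a \<Rightarrow> 'a::zero) \<Rightarrow> 'a set" where
  "gker A = {x. \<exists>n. (A ^^ n) x = 0}"

lemma funpow_lin: "bounded_linear (A::'a::real_normed_vector \<Rightarrow> 'a) \<Longrightarrow> linear (A ^^ n)"
  by (rule bounded_linear.linear[OF funpow_bl])

lemma funpow_zero: "bounded_linear (A::'a::real_normed_vector \<Rightarrow> 'a) \<Longrightarrow> (A ^^ n) 0 = 0"
  by (rule linear_0[OF funpow_lin])

lemma gker_eq:
  fixes A :: "'a::real_normed_vector \<Rightarrow> 'a"
  assumes A: "bounded_linear A" and st: "(A ^^ d) -` {0} = (A ^^ Suc d) -` {0}"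
  shows "gker A = {x. (A ^^ d) x = 0}"
proof
  show "{x. (A ^^ d) x = 0} \<subseteq> gker A" by (auto simp: gker_def)
  have st': "(A ^^ d) y = 0" if "(A ^^ Suc d) y = 0" for y
    using st that by (auto simp: set_eq_iff)
  have key: "(A ^^ (d + k)) x = 0 \<Longrightarrow> (A ^^ d) x = 0" for k x
  proof (induction k arbitrary: x)
    case 0 then show ?case by simp
  next
    case (Suc k)
    have e1: "d + Suc k = Suc d + k" by simp
    have "(A ^^ (d + Suc k)) x = (A ^^ Suc d) ((A ^^ k) x)"
      unfolding e1 by (simp only: funpow_add comp_apply)
    then have "(A ^^ d) ((A ^^ k) x) = 0" using Suc.prems st' by simp
    then have "(A ^^ (d + k)) x = 0" by (simp only: funpow_add comp_apply)
    then show ?case by (rule Suc.IH)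
  qed
  show "gker A \<subseteq> {x. (A ^^ d) x = 0}"
  proof
    fix x assume "x \<in> gker A"
    then obtain n where n: "(A ^^ n) x = 0" by (auto simp: gker_def)
    show "x \<in> {x. (A ^^ d) x = 0}"
    proof (cases "n \<le> d")
      case True
      then have e2: "d = (d - n) + n" by simp
      have "(A ^^ d) x = (A ^^ (d - n)) ((A ^^ n) x)"
        by (subst e2) (simp only: funpow_add comp_apply)
      then show ?thesis using n funpow_zero[OF A] by simp
    next
      case False
      then have "n = d + (n - d)" by simp
      then show ?thesis using key[of "n - d" x] n by simp
    qed
  qed
qed

lemma LD_imp:
  fixes A :: "'a::banach \<Rightarrow> 'a"
  assumes A: "bounded_linear A" and ld: "left_drazin_invertible A"
  shows "\<exists>d. (A ^^ d) -` {0} = (A ^^ Suc d) -` {0}"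
    and "\<exists>c>0. \<forall>x. c * infdist x (gker A) \<le> infdist (A x) (gker A)"
proof -
  have ex: "\<exists>n. (A ^^ n) -` {0} = (A ^^ Suc n) -` {0}"
    using ld by (auto simp: left_drazin_invertible_def ascent_def split: if_splits)
  then show "\<exists>d. (A ^^ d) -` {0} = (A ^^ Suc d) -` {0}" .
  define d where "d = (LEAST n. (A ^^ n) -` {0} = (A ^^ Suc n) -` {0})"
  have st: "(A ^^ d) -` {0} = (A ^^ Suc d) -` {0}" unfolding d_def by (rule LeastI_ex[OF ex])
  have asc: "ascent A = enat d" using ex by (simp add: ascent_def d_def)
  let ?S = "A ^^ Suc d"
  have cl: "closed (range ?S)" using ld asc by (simp add: left_drazin_invertible_def)
  have Sbl: "bounded_linear ?S" by (rule funpow_bl[OF A])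
  obtain C where C: "C > 0" "\<And>x. \<exists>x'. ?S x' = ?S x \<and> norm x' \<le> C * norm (?S x)"
    using open_mapping_closed_range[OF Sbl cl] by blast
  define K where "K = gker A"
  have K: "K = {x. (A ^^ d) x = 0}" unfolding K_def by (rule gker_eq[OF A st])
  have Ld: "linear (A ^^ d)" by (rule funpow_lin[OF A])
  have LS: "linear ?S" by (rule funpow_lin[OF A])
  have Kne: "K \<noteq> {}" using K linear_0[OF Ld] by auto
  obtain M where M: "M > 0" "\<And>z. norm ((A ^^ d) z) \<le> norm z * M"
    using bounded_linear.pos_bounded[OF funpow_bl[OF A, of d]] by blast
  have st': "(A ^^ d) y = 0" if "(A ^^ Suc d) y = 0" for y
    using st that by (auto simp: set_eq_iff)
  have bnd: "infdist x K / (C * M) \<le> infdist (A x) K" for x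
  proof (rule infdist_ge[OF Kne])
    fix k assume k: "k \<in> K"
    obtain x' where x': "?S x' = ?S x" "norm x' \<le> C * norm (?S x)" using C(2) by blast
    have "?S (x - x') = ?S x - ?S x'" by (rule linear_diff[OF LS])
    then have "?S (x - x') = 0" using x'(1) by simp
    then have "x - x' \<in> K" using K st' by simp
    then have "infdist x K \<le> dist x (x - x')" by (rule infdist_le)
    also have "\<dots> = norm x'" by simp
    also have "\<dots> \<le> C * norm (?S x)" by (rule x'(2))
    also have "?S x = (A ^^ d) (A x - k)"
      using k K by (simp add: linear_diff[OF Ld] funpow_swap1)
    also have "C * norm \<dots> \<le> C * (dist (A x) k * M)"
      using M(2) C(1) by (simp add: dist_norm)
    finally show "infdist x K / (C * M) \<le> dist (A x) k"
      using C(1) M(1) by (simp add: field_simps)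
  qed
  show "\<exists>c>0. \<forall>x. c * infdist x (gker A) \<le> infdist (A x) (gker A)"
    using bnd C(1) M(1) unfolding K_def by (intro exI[of _ "1 / (C * M)"]) simp
qed

lemma Q_imp_LD:
  fixes A :: "'a::banach \<Rightarrow> 'a"
  assumes A: "bounded_linear A" and ex: "\<exists>n. (A ^^ n) -` {0} = (A ^^ Suc n) -` {0}"
    and c: "c > 0" "\<And>x. c * infdist x (gker A) \<le> infdist (A x) (gker A)"
  shows "left_drazin_invertible A"
proof -
  define d where "d = (LEAST n. (A ^^ n) -` {0} = (A ^^ Suc n) -` {0})"
  have st: "(A ^^ d) -` {0} = (A ^^ Suc d) -` {0}" unfolding d_def by (rule LeastI_ex[OF ex])
  have asc: "ascent A = enat d" using ex by (simp add: ascent_def d_def)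
  let ?S = "A ^^ Suc d"
  define K where "K = gker A"
  have K: "K = {x. (A ^^ d) x = 0}" unfolding K_def by (rule gker_eq[OF A st])
  have Ld: "linear (A ^^ d)" by (rule funpow_lin[OF A])
  have LS: "linear ?S" by (rule funpow_lin[OF A])
  have K0: "0 \<in> K" using K linear_0[OF Ld] by auto
  then have Kne: "K \<noteq> {}" by auto
  have it: "c ^ n * infdist x K \<le> infdist ((A ^^ n) x) K" for n x
  proof (induction n)
    case 0 then show ?case by simp
  next
    case (Suc n)
    have "c ^ Suc n * infdist x K = c * (c ^ n * infdist x K)" by simp
    also have "\<dots> \<le> c * infdist ((A ^^ n) x) K" using Suc c(1) by (simp add: mult_left_mono)
    also have "\<dots> \<le> infdist ((A ^^ Suc n) x) K" using c(2)[of "(A ^^ n) x"] K_def by simp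
    finally show ?case .
  qed
  define C0 where "C0 = 1 / c ^ Suc d"
  have C0: "C0 > 0" using c(1) by (simp add: C0_def)
  have qS: "infdist x K \<le> C0 * norm (?S x)" for x
  proof -
    have "infdist (?S x) K \<le> dist (?S x) 0" by (rule infdist_le[OF K0])
    then have "c ^ Suc d * infdist x K \<le> norm (?S x)" using it[of "Suc d" x] by simp
    then show ?thesis using c(1) by (simp add: C0_def field_simps mult.commute)
  qed
  have exact: "\<exists>x'. ?S x' = ?S x \<and> norm x' \<le> (C0 + 1) * norm (?S x)" for x
  proof (cases "?S x = 0")
    case True then show ?thesis
      by (intro exI[of _ 0]) (simp add: funpow_zero[OF A] linear_0[OF bounded_linear.linear[OF A]])
  next
    case False
    then have ns: "norm (?S x) > 0" by simp
    obtain k where k: "k \<in> K" "dist x k < infdist x K + norm (?S x)"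
    proof (rule ccontr)
      assume "\<not> thesis"
      then have "\<forall>k\<in>K. infdist x K + norm (?S x) \<le> dist x k" using that by force
      then have "infdist x K + norm (?S x) \<le> infdist x K" by (intro infdist_ge[OF Kne]) auto
      then show False using ns by simp
    qed
    have "?S k = A ((A ^^ d) k)" by simp
    then have Sk: "?S k = 0" using k(1) K A by (simp add: linear_0[OF bounded_linear.linear[OF A]])
    have "?S (x - k) = ?S x - ?S k" by (rule linear_diff[OF LS])
    then have "?S (x - k) = ?S x" using Sk by simp
    moreover have "norm (x - k) \<le> (C0 + 1) * norm (?S x)"
      using k(2) qS[of x] by (simp add: dist_norm algebra_simps)
    ultimately show ?thesis by blast
  qed
  have "closed (range ?S)"
    by (rule exact_imp_closed[OF funpow_bl[OF A] _ exact]) (use C0 in simp)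
  then show ?thesis using asc by (simp add: left_drazin_invertible_def)
qed

lemma kerlemma:
  fixes A N :: "'a::real_normed_vector \<Rightarrow> 'a"
  assumes A: "bounded_linear A" and N: "bounded_linear N"
    and comm: "\<And>x. A (N x) = N (A x)"
  shows "(A ^^ k) x = 0 \<Longrightarrow> (N ^^ j) x = 0 \<Longrightarrow> ((\<lambda>x. A x + N x) ^^ (k + j)) x = 0"
proof (induction "k + j" arbitrary: k j x)
  case 0 then show ?case by simp
next
  case (Suc n)
  let ?B = "\<lambda>x. A x + N x"
  have B: "bounded_linear ?B" using A N by (rule bounded_linear_add)
  have LBn: "linear (?B ^^ n)" by (rule funpow_lin[OF B])
  show ?case
  proof (cases "k = 0 \<or> j = 0")
    case True
    then have "x = 0" using Suc.prems by (auto simp only: funpow_0)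
    then show ?thesis by (simp add: funpow_zero[OF B])
  next
    case False
    then obtain k' j' where kj: "k = Suc k'" "j = Suc j'" by (metis not0_implies_Suc)
    have "(A ^^ k') (A x) = 0" using Suc.prems(1) kj by (simp only: funpow_Suc_right comp_apply)
    moreover have "(N ^^ j) (A x) = 0"
    proof -
      have "A ((N ^^ j) x) = (N ^^ j) (A x)" by (rule funpow_comm[of A N j x, OF comm])
      then show ?thesis using Suc.prems(2) linear_0[OF bounded_linear.linear[OF A]] by simp
    qed
    moreover have "k' + j = n" using Suc.hyps(2) kj by simp
    ultimately have a1: "(?B ^^ n) (A x) = 0" using Suc.hyps(1) by blast
    have "(A ^^ k) (N x) = 0"
    proof -
      have "N ((A ^^ k) x) = (A ^^ k) (N x)" by (rule funpow_comm[of N A k x, OF comm[symmetric]])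
      then show ?thesis using Suc.prems(1) linear_0[OF bounded_linear.linear[OF N]] by simp
    qed
    moreover have "(N ^^ j') (N x) = 0" using Suc.prems(2) kj by (simp only: funpow_Suc_right comp_apply)
    moreover have "k + j' = n" using Suc.hyps(2) kj by simp
    ultimately have a2: "(?B ^^ n) (N x) = 0" using Suc.hyps(1) by blast
    have "(?B ^^ (k + j)) x = (?B ^^ n) (A x + N x)"
      by (simp only: Suc.hyps(2)[symmetric] funpow_Suc_right comp_apply)
    also have "\<dots> = 0" using linear_add[OF LBn] a1 a2 by simp
    finally show ?thesis .
  qed
qed

lemma neg_pow:
  fixes N :: "'a::real_normed_vector \<Rightarrow> 'a"
  assumes N: "bounded_linear N"
  shows "((\<lambda>x. - N x) ^^ j) x = (if even j then (N ^^ j) x else - (N ^^ j) x)"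
  by (induction j) (auto simp: linear_neg[OF bounded_linear.linear[OF N]])

lemma LD_perturb:
  fixes A N :: "'a::banach \<Rightarrow> 'a"
  assumes A: "bounded_linear A" and N: "bounded_linear N"
    and comm: "\<And>x. A (N x) = N (A x)" and nil: "\<And>x. (N ^^ m) x = 0"
    and ld: "left_drazin_invertible A"
  shows "left_drazin_invertible (\<lambda>x. A x + N x)"
proof -
  let ?B = "\<lambda>x. A x + N x"
  have B: "bounded_linear ?B" using A N by (rule bounded_linear_add)
  have N': "bounded_linear (\<lambda>x. - N x)" using N by (rule bounded_linear_minus)
  have LN: "linear N" using N by (rule bounded_linear.linear)
  have LA: "linear A" using A by (rule bounded_linear.linear)
  have comm': "?B (- N x) = - N (?B x)" for x
    using comm[of x] by (simp add: linear_neg[OF LA] linear_neg[OF LN] linear_add[OF LN])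
  have nil': "((\<lambda>x. - N x) ^^ m) x = 0" for x
    using nil[of x] by (simp add: neg_pow[OF N])
  have BA: "(\<lambda>x. ?B x + - N x) = A" by auto
  obtain d where st: "(A ^^ d) -` {0} = (A ^^ Suc d) -` {0}" using LD_imp(1)[OF A ld] by blast
  obtain c where c: "c > 0" "\<And>x. c * infdist x (gker A) \<le> infdist (A x) (gker A)"
    using LD_imp(2)[OF A ld] by blast
  have K: "gker A = {x. (A ^^ d) x = 0}" by (rule gker_eq[OF A st])
  have Ld: "linear (A ^^ d)" by (rule funpow_lin[OF A])
  have gB: "gker ?B = gker A"
  proof
    show "gker A \<subseteq> gker ?B"
    proof
      fix x assume "x \<in> gker A"
      then obtain k where k: "(A ^^ k) x = 0" by (auto simp: gker_def)
      have "(?B ^^ (k + m)) x = 0" by (rule kerlemma[OF A N comm, of k x m, OF k nil])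
      then show "x \<in> gker ?B" by (auto simp: gker_def)
    qed
    show "gker ?B \<subseteq> gker A"
    proof
      fix x assume "x \<in> gker ?B"
      then obtain k where k: "(?B ^^ k) x = 0" by (auto simp: gker_def)
      have "((\<lambda>x. ?B x + - N x) ^^ (k + m)) x = 0"
        by (rule kerlemma[where A="\<lambda>x. A x + N x" and N="\<lambda>x. - N x", OF B N' comm', of k x m, OF k nil'])
      then show "x \<in> gker A" unfolding BA by (auto simp: gker_def)
    qed
  qed
  have stB: "(?B ^^ (d + m)) -` {0} = (?B ^^ Suc (d + m)) -` {0}"
  proof (intro set_eqI iffI)
    fix x assume "x \<in> (?B ^^ (d + m)) -` {0}"
    then show "x \<in> (?B ^^ Suc (d + m)) -` {0}"
      using linear_0[OF bounded_linear.linear[OF B]] by simp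
  next
    fix x assume "x \<in> (?B ^^ Suc (d + m)) -` {0}"
    then have "x \<in> gker ?B" unfolding gker_def vimage_def by blast
    then have "(A ^^ d) x = 0" using gB K by simp
    then have "(?B ^^ (d + m)) x = 0" by (rule kerlemma[OF A N comm, of d x m, OF _ nil])
    then show "x \<in> (?B ^^ (d + m)) -` {0}" by simp
  qed
  interpret subsp "gker A"
  proof
    show "0 \<in> gker A" using K linear_0[OF Ld] by simp
    show "a + b \<in> gker A" if "a \<in> gker A" "b \<in> gker A" for a b
      using that K linear_add[OF Ld] by simp
    show "- a \<in> gker A" if "a \<in> gker A" for a
      using that K linear_neg[OF Ld] by simp
  qed
  have NK: "N k \<in> gker A" if "k \<in> gker A" for k
  proof -
    have "(A ^^ d) (N k) = N ((A ^^ d) k)" by (rule funpow_comm[of N A d k, OF comm[symmetric], symmetric])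
    then show ?thesis using that K linear_0[OF LN] by simp
  qed
  obtain M where M: "M > 0" "\<And>x. infdist (N x) (gker A) \<le> M * infdist x (gker A)"
    using q_lin[OF N NK] by blast
  obtain c' where c': "c' > 0" "\<And>x. c' * infdist x (gker A) \<le> infdist (?B x) (gker A)"
    using perturb_below[of "\<lambda>x. infdist x (gker A)" N M m A c, OF q_add q_neg q0 N M(2) less_imp_le[OF M(1)] nil comm c]
    by blast
  have ex: "\<exists>n. (?B ^^ n) -` {0} = (?B ^^ Suc n) -` {0}" using stB by blast
  have c2: "\<And>x. c' * infdist x (gker ?B) \<le> infdist (?B x) (gker ?B)" unfolding gB by (rule c'(2))
  show ?thesis by (rule Q_imp_LD[OF B ex c'(1) c2])
qed

lemma BB_perturb:
  fixes A N :: "'a::real_normed_vector \<Rightarrow> 'a"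
  assumes N: "bounded_linear N"
    and comm: "\<And>x. A (N x) = N (A x)" and nil: "\<And>x. (N ^^ m) x = 0"
    and bb: "bounded_below A"
  shows "bounded_below (\<lambda>x. A x + N x)"
proof -
  obtain c where c: "c > 0" "\<And>x. c * norm x \<le> norm (A x)" using bb by (auto simp: bounded_below_def)
  obtain M where M: "M > 0" "\<And>x. norm (N x) \<le> norm x * M"
    using bounded_linear.pos_bounded[OF N] by blast
  have qN: "norm (N x) \<le> M * norm x" for x using M(2)[of x] by (simp add: mult.commute)
  obtain c' where "c' > 0" "\<forall>x. c' * norm x \<le> norm (A x + N x)"
    using perturb_below[of norm N M m A c, OF norm_triangle_ineq norm_minus_cancel norm_zero N qN _ nil comm c]
      M(1) by auto
  then show ?thesis by (auto simp: bounded_below_def)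
qed

lemma both_iff:
  fixes A N :: "'a::banach \<Rightarrow> 'a"
  assumes A: "bounded_linear A" and N: "bounded_linear N"
    and comm: "\<And>x. A (N x) = N (A x)" and nil: "\<And>x. (N ^^ m) x = 0"
  shows "bounded_below (\<lambda>x. A x + N x) \<longleftrightarrow> bounded_below A"
    and "left_drazin_invertible (\<lambda>x. A x + N x) \<longleftrightarrow> left_drazin_invertible A"
proof -
  let ?B = "\<lambda>x. A x + N x"
  have B: "bounded_linear ?B" using A N by (rule bounded_linear_add)
  have N': "bounded_linear (\<lambda>x. - N x)" using N by (rule bounded_linear_minus)
  have LN: "linear N" using N by (rule bounded_linear.linear)
  have LA: "linear A" using A by (rule bounded_linear.linear)
  have comm': "?B (- N x) = - N (?B x)" for x
    using comm[of x] by (simp add: linear_neg[OF LA] linear_neg[OF LN] linear_add[OF LN])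
  have nil': "((\<lambda>x. - N x) ^^ m) x = 0" for x
    using nil[of x] by (simp add: neg_pow[OF N])
  have BA: "(\<lambda>x. ?B x + - N x) = A" by auto
  show "bounded_below ?B \<longleftrightarrow> bounded_below A"
  proof
    assume "bounded_below ?B"
    from BB_perturb[where A="\<lambda>x. A x + N x" and N="\<lambda>x. - N x", OF N' comm' nil' this] show "bounded_below A" unfolding BA .
  next
    assume "bounded_below A"
    from BB_perturb[OF N comm nil this] show "bounded_below ?B" .
  qed
  show "left_drazin_invertible ?B \<longleftrightarrow> left_drazin_invertible A"
  proof
    assume "left_drazin_invertible ?B"
    from LD_perturb[where A="\<lambda>x. A x + N x" and N="\<lambda>x. - N x", OF B N' comm' nil' this] show "left_drazin_invertible A" unfolding BA .
  next
    assume "left_drazin_invertible A"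
    from LD_perturb[OF A N comm nil this] show "left_drazin_invertible ?B" .
  qed
qed

theorem corollary3p9:
  fixes sc :: "complex \<Rightarrow> 'a::banach \<Rightarrow> 'a"
    and T N :: "'a \<Rightarrow> 'a"
  assumes "complex_scalar sc"
    and "infinite_dimensional TYPE('a)"
    and "bounded_op sc T"
    and "bounded_op sc N"
    and "nilpotent_op N"
    and "T \<circ> N = N \<circ> T"
  shows "left_poles sc (\<lambda>x. T x + N x) = left_poles sc T"
proof -
  have sc1: "\<And>r x. sc (complex_of_real r) x = r *\<^sub>R x"
    and sc2: "\<And>a b x. sc (a * b) x = sc a (sc b x)"
    and sc4: "\<And>a x y. sc a (x + y) = sc a x + sc a y"
    and sc5: "\<And>a x. norm (sc a x) = cmod a * norm x"
    using assms(1) unfolding complex_scalar_def by auto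
  have scbl: "bounded_linear (sc l)" for l
  proof (rule bounded_linear_intro[where K = "cmod l"])
    show "sc l (x + y) = sc l x + sc l y" for x y by (rule sc4)
    show "sc l (r *\<^sub>R x) = r *\<^sub>R sc l x" for r x
    proof -
      have "sc l (r *\<^sub>R x) = sc l (sc (complex_of_real r) x)" by (simp add: sc1)
      also have "\<dots> = sc (complex_of_real r * l) x" by (simp add: sc2 mult.commute)
      also have "\<dots> = r *\<^sub>R sc l x" by (simp add: sc2 sc1)
      finally show ?thesis .
    qed
    show "norm (sc l x) \<le> norm x * cmod l" for x by (simp add: sc5 mult.commute)
  qed
  have Tbl: "bounded_linear T" and Nbl: "bounded_linear N"
    and Nsc: "\<And>a x. N (sc a x) = sc a (N x)"
    using assms(3,4) unfolding bounded_op_def by auto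
  obtain m where m: "N ^^ m = (\<lambda>x. 0)" using assms(5) unfolding nilpotent_op_def by blast
  have nil: "(N ^^ m) x = 0" for x using m by simp
  have TN: "T (N x) = N (T x)" for x using assms(6) by (metis comp_apply)
  have LN: "linear N" using Nbl by (rule bounded_linear.linear)
  have key: "l \<in> left_poles sc (\<lambda>x. T x + N x) \<longleftrightarrow> l \<in> left_poles sc T" for l
  proof -
    let ?A = "\<lambda>x. T x - sc l x"
    have Abl: "bounded_linear ?A" by (rule bounded_linear_sub[OF Tbl scbl])
    have comm: "?A (N x) = N (?A x)" for x by (simp add: linear_diff[OF LN] TN Nsc)
    have eq: "(\<lambda>x. T x + N x - sc l x) = (\<lambda>x. ?A x + N x)" by (auto simp: algebra_simps)
    show ?thesis
      unfolding left_poles_def approx_point_spectrum_def mem_Collect_eq eq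
      using both_iff[OF Abl Nbl comm nil] by simp
  qed
  then show ?thesis by blast
qed

end
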